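(* Let $1\le d\le N$ be integers. A real matrix $\lambda=(\lambda_{i,n})\in\mathbb{R}^{d\times(N+1)}$ (rows $1\le i\le d$, columns $0\le n\le N$) lies in $\Lambda_{N,d}$ if and only if it satisfies all of the following: (C1) $\lambda_{i,n}=0$ whenever $i>n$; (C2) $\lambda_{i,n}=N$ whenever $i<n+d-N+1$; (C3) $\sum_{i=1}^d\lambda_{i,n}=dn$ for $0<n<N$; (C4) $\lambda_{i,n}\le\lambda_{i,n+1}$ for $1\le i\le d$ and $i\le n<N-d+i-1$; (C5) $\lambda_{i,n}\le\lambda_{i-1,n-1}$ for $1<i\le d$ and $i\le n<N-d+i$; (C6) $\lambda_{d,d}\ge 0$; (C7) $\lambda_{1,N-d}\le N$.
   Context: For integers $0\le d\le N$, $\Lambda_{N,d}\subseteq\mathbb{R}^{d\times(N+1)}$ denotes the set of real matrices $\lambda=(\lambda_{i,n})$, with rows indexed by $1\le i\le d$ and columns indexed by $0\le n\le N$, satisfying: $\lambda_{i,0}=0$ for $1\le i\le d$; $\lambda_{i,N}=N$ for $1\le i\le d$; $\sum_{i=1}^d\lambda_{i,n}=dn$ for $0\le n\le N$; $\lambda_{i,n}\le\lambda_{i,n+1}$ for $1\le i\le d$, $0\le n<N$ (horizontal inequalities); $\lambda_{i,n}\le\lambda_{i-1,n-1}$ for $1<i\le d$, $0<n\le N$ (diagonal inequalities). (This is the polytope of eigensteps of equal norm tight frames of $N$ vectors in $d$ dimensions with squared norms $d$.) *)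

theory Defs
  imports Main Complex_Main
begin

text \<open>A real matrix with rows 1..d and columns 0..N is represented by a function
  lam :: nat => nat => real, where lam i n is the entry in row i, column n.
  Only entries with 1 <= i <= d and 0 <= n <= N are ever consulted.\<close>

definition eigensteps :: "nat \<Rightarrow> nat \<Rightarrow> (nat \<Rightarrow> nat \<Rightarrow> real) \<Rightarrow> bool" where
  "eigensteps N d lam \<longleftrightarrow>
     (\<forall>i\<in>{1..d}. lam i 0 = 0) \<and>
     (\<forall>i\<in>{1..d}. lam i N = real N) \<and>
     (\<forall>n\<in>{0..N}. (\<Sum>i=1..d. lam i n) = real d * real n) \<and>
     (\<forall>i\<in>{1..d}. \<forall>n<N. lam i n \<le> lam i (n+1)) \<and>
     (\<forall>i\<in>{2..d}. \<forall>n\<in>{1..N}. lam i n \<le> lam (i-1) (n-1))"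

end

theory Submission
  imports Defs
begin

lemma chain_inc:
  fixes f :: "nat \<Rightarrow> real"
  assumes "\<And>n. a \<le> n \<Longrightarrow> n < b \<Longrightarrow> f n \<le> f (Suc n)"
  shows "a \<le> m \<Longrightarrow> m \<le> m' \<Longrightarrow> m' \<le> b \<Longrightarrow> f m \<le> f m'"
proof (induction m')
  case 0 then show ?case by simp
next
  case (Suc m')
  show ?case
  proof (cases "m = Suc m'")
    case False
    then have "f m \<le> f m'" using Suc by simp
    also have "\<dots> \<le> f (Suc m')" using assms Suc False by simp
    finally show ?thesis .
  qed simp
qed

lemma chain_dec:
  fixes f :: "nat \<Rightarrow> real"
  assumes "\<And>n. a \<le> n \<Longrightarrow> n < b \<Longrightarrow> f (Suc n) \<le> f n"
  shows "a \<le> m \<Longrightarrow> m \<le> m' \<Longrightarrow> m' \<le> b \<Longrightarrow> f m' \<le> f m"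
  using chain_inc[of a b "\<lambda>n. - f n" m m'] assms by simp

lemma fwd:
  assumes E: "eigensteps N d lam" and d: "1 \<le> d" "d \<le> N"
  shows "(\<forall>i\<in>{1..d}. \<forall>n\<le>N. n < i \<longrightarrow> lam i n = 0) \<and>
    (\<forall>i\<in>{1..d}. \<forall>n\<le>N. i + N \<le> n + d \<longrightarrow> lam i n = real N) \<and>
    (\<forall>i\<in>{1..d}. \<forall>n\<le>N. 0 \<le> lam i n \<and> lam i n \<le> real N)"
proof -
  have z: "\<forall>i\<in>{1..d}. lam i 0 = 0" and t: "\<forall>i\<in>{1..d}. lam i N = real N"
    and h: "\<forall>i\<in>{1..d}. \<forall>n<N. lam i n \<le> lam i (n+1)"
    and g: "\<forall>i\<in>{2..d}. \<forall>n\<in>{1..N}. lam i n \<le> lam (i-1) (n-1)"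
    using E unfolding eigensteps_def by auto
  have B: "0 \<le> lam i n \<and> lam i n \<le> real N" if "i \<in> {1..d}" "n \<le> N" for i n
  proof -
    have hh: "\<And>m. 0 \<le> m \<Longrightarrow> m < N \<Longrightarrow> lam i m \<le> lam i (Suc m)" using h that by simp
    have "lam i 0 \<le> lam i n" "lam i n \<le> lam i N"
      using chain_inc[of 0 N "lam i", OF hh] that by auto
    then show ?thesis using z t that by auto
  qed
  have Z: "lam i n = 0" if "i \<in> {1..d}" "n \<le> N" "n < i" for i n
  proof -
    have "lam (i - n) (n - n) \<ge> lam (i - 0) (n - 0)"
    proof (rule chain_inc[of 0 n "\<lambda>k. lam (i-k) (n-k)"])
      fix k assume "0 \<le> k" "k < n"
      then have "lam (i-k) (n-k) \<le> lam (i-k-1) (n-k-1)"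
      proof -
        have "i-k \<in> {2..d}" "n-k \<in> {1..N}" using that \<open>k<n\<close> by auto
        from g[rule_format, OF this] show ?thesis by simp
      qed
      then show "lam (i-k) (n-k) \<le> lam (i - Suc k) (n - Suc k)" by simp
    qed auto
    moreover have "i - n \<in> {1..d}" using that by auto
    then have "lam (i-n) 0 = 0" using z by blast
    ultimately show ?thesis using B[OF that(1,2)] by simp
  qed
  have T: "lam i n = real N" if "i \<in> {1..d}" "n \<le> N" "i + N \<le> n + d" for i n
  proof -
    have "lam (i + (N-n)) (n + (N-n)) \<le> lam (i+0) (n+0)"
    proof (rule chain_dec[of 0 "N-n" "\<lambda>k. lam (i+k) (n+k)"])
      fix k assume "0 \<le> k" "k < N - n"
      then show "lam (i + Suc k) (n + Suc k) \<le> lam (i+k) (n+k)"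
        using g[rule_format, of "i + Suc k" "n + Suc k"] that by auto
    qed auto
    moreover have "i + (N-n) \<in> {1..d}" using that by auto
    then have "lam (i + (N-n)) (n + (N-n)) = real N" using t that by auto
    ultimately show ?thesis using B[OF that(1,2)] by simp
  qed
  show ?thesis using B Z T by auto
qed

lemma bwd:
  assumes d: "1 \<le> d" "d \<le> N"
  and C1: "\<forall>i\<in>{1..d}. \<forall>n\<le>N. n < i \<longrightarrow> lam i n = 0"
  and C2: "\<forall>i\<in>{1..d}. \<forall>n\<le>N. i + N \<le> n + d \<longrightarrow> lam i n = real N"
  and C3: "\<forall>n. 0 < n \<and> n < N \<longrightarrow> (\<Sum>i=1..d. lam i n) = real d * real n"
  and C4: "\<forall>i\<in>{1..d}. \<forall>n. i \<le> n \<and> n + d + 1 < N + i \<longrightarrow> lam i n \<le> lam i (n+1)"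
  and C5: "\<forall>i\<in>{2..d}. \<forall>n. i \<le> n \<and> n + d < N + i \<longrightarrow> lam i n \<le> lam (i-1) (n-1)"
  and C6: "lam d d \<ge> 0"
  and C7: "lam 1 (N - d) \<le> real N"
  shows "eigensteps N d lam"
proof -
  have free: "0 \<le> lam i n \<and> lam i n \<le> real N"
    if i: "i \<in> {1..d}" and f: "i \<le> n" "n + d < N + i" for i n
  proof
    have r1: "lam 1 (n - i + 1) \<le> lam 1 (N - d)"
    proof (rule chain_inc[of 1 "N-d" "lam 1"])
      fix m assume "1 \<le> m" "m < N - d"
      then show "lam 1 m \<le> lam 1 (Suc m)" using C4 d by auto
    qed (use f in auto)
    have dg: "lam (i - (i-1)) (n - (i-1)) \<ge> lam (i-0) (n-0)"
    proof (rule chain_inc[of 0 "i-1" "\<lambda>k. lam (i-k) (n-k)"])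
      fix k assume "0 \<le> k" "k < i - 1"
      have "i-k \<in> {2..d}" "i-k \<le> n-k" "n - k + d < N + (i-k)" using that \<open>k < i - 1\<close> by auto
      from C5[rule_format, OF this(1) conjI[OF this(2,3)]]
      show "lam (i-k) (n-k) \<le> lam (i - Suc k) (n - Suc k)" by simp
    qed auto
    have "n - (i-1) = n - i + 1" using f i by auto
    then show "lam i n \<le> real N" using dg r1 C7 i by auto
  next
    have rd: "lam d d \<le> lam d (n + d - i)"
    proof (rule chain_inc[of d "N-1" "lam d"])
      fix m assume "d \<le> m" "m < N - 1"
      then show "lam d m \<le> lam d (Suc m)" using C4 d by auto
    qed (use f i in auto)
    have dg: "lam (i + (d-i)) (n + (d-i)) \<le> lam (i+0) (n+0)"
    proof (rule chain_dec[of 0 "d-i" "\<lambda>k. lam (i+k) (n+k)"])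
      fix k assume "0 \<le> k" "k < d - i"
      have "i + Suc k \<in> {2..d}" "i + Suc k \<le> n + Suc k" "n + Suc k + d < N + (i + Suc k)"
        using that \<open>k < d - i\<close> by auto
      from C5[rule_format, OF this(1) conjI[OF this(2,3)]]
      show "lam (i + Suc k) (n + Suc k) \<le> lam (i+k) (n+k)" by simp
    qed auto
    have "i + (d-i) = d" "n + (d - i) = n + d - i" using f i by auto
    then show "0 \<le> lam i n" using dg rd C6 by auto
  qed
  have bnd: "0 \<le> lam i n \<and> lam i n \<le> real N" if i: "i \<in> {1..d}" and n: "n \<le> N" for i n
  proof (cases "n < i")
    case True then show ?thesis using C1 i n by auto
  next
    case False
    show ?thesis
    proof (cases "i + N \<le> n + d")
      case True then show ?thesis using C2 i n by auto
    next
      case False2: False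
      then show ?thesis using free[OF i] False by auto
    qed
  qed
  have cls: "n < i \<or> i + N \<le> n + d \<or> (i \<le> n \<and> n + d < N + i)" for i n :: nat by auto
  show ?thesis unfolding eigensteps_def
  proof (intro conjI ballI allI impI)
    fix i assume i: "i \<in> {1..d}"
    show "lam i 0 = 0" using C1 i by auto
    show "lam i N = real N" using C2 i by auto
  next
    fix n assume n: "n \<in> {0..N}"
    show "(\<Sum>i=1..d. lam i n) = real d * real n"
    proof (cases "n = 0 \<or> n = N")
      case True
      then show ?thesis
      proof
        assume "n = 0"
        then have "\<forall>i\<in>{1..d}. lam i n = 0" using C1 by auto
        then show ?thesis using \<open>n = 0\<close> by simp
      next
        assume "n = N"
        then have "\<forall>i\<in>{1..d}. lam i n = real N" using C2 by auto
        then show ?thesis using \<open>n = N\<close> by simp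
      qed
    next
      case False then show ?thesis using C3 n by auto
    qed
  next
    fix i n assume i: "i \<in> {1..d}" and n: "n < N"
    show "lam i n \<le> lam i (n+1)"
    proof -
      consider "n < i" | "i + N \<le> n + 1 + d" | "i \<le> n" "n + 1 + d < N + i" by linarith
      then show ?thesis
      proof cases
        case 1 then show ?thesis using C1 bnd[OF i, of "n+1"] i n by auto
      next
        case 2 then show ?thesis using C2 bnd[OF i, of n] i n by auto
      next
        case 3 then show ?thesis using C4 i by auto
      qed
    qed
  next
    fix i n assume i: "i \<in> {2..d}" and n: "n \<in> {1..N}"
    have i1: "i - 1 \<in> {1..d}" using i by auto
    show "lam i n \<le> lam (i-1) (n-1)"
    proof -
      consider "n < i" | "i - 1 + N \<le> n - 1 + d" | "i \<le> n" "n + d < N + i" using i n unfolding atLeastAtMost_iff by arith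
      then show ?thesis
      proof cases
        case 1 then show ?thesis using C1 bnd[OF i1, of "n-1"] i n by auto
      next
        case 2 then show ?thesis using C2 i1 bnd[of i n] i n by auto
      next
        case 3 then show ?thesis using C5 i by auto
      qed
    qed
  qed
qed


theorem proposition3p1:
  fixes N d :: nat and lam :: "nat \<Rightarrow> nat \<Rightarrow> real"
  assumes "1 \<le> d" and "d \<le> N"
  shows "eigensteps N d lam \<longleftrightarrow>
    (\<forall>i\<in>{1..d}. \<forall>n\<in>{0..N}. i > n \<longrightarrow> lam i n = 0) \<and>
    (\<forall>i\<in>{1..d}. \<forall>n\<in>{0..N}. int i < int n + int d - int N + 1 \<longrightarrow> lam i n = real N) \<and>
    (\<forall>n. 0 < n \<and> n < N \<longrightarrow> (\<Sum>i=1..d. lam i n) = real d * real n) \<and>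
    (\<forall>i\<in>{1..d}. \<forall>n. i \<le> n \<and> int n < int N - int d + int i - 1 \<longrightarrow> lam i n \<le> lam i (n+1)) \<and>
    (\<forall>i\<in>{2..d}. \<forall>n. i \<le> n \<and> int n < int N - int d + int i \<longrightarrow> lam i n \<le> lam (i-1) (n-1)) \<and>
    lam d d \<ge> 0 \<and>
    lam 1 (N - d) \<le> real N"
proof
  assume E: "eigensteps N d lam"
  note F = fwd[OF E assms]
  from E have h: "\<forall>i\<in>{1..d}. \<forall>n<N. lam i n \<le> lam i (n+1)"
    and g: "\<forall>i\<in>{2..d}. \<forall>n\<in>{1..N}. lam i n \<le> lam (i-1) (n-1)"
    and s: "\<forall>n\<in>{0..N}. (\<Sum>i=1..d. lam i n) = real d * real n"
    unfolding eigensteps_def by auto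
  have c1: "\<forall>i\<in>{1..d}. \<forall>n\<in>{0..N}. i > n \<longrightarrow> lam i n = 0" using F by auto
  have c2: "\<forall>i\<in>{1..d}. \<forall>n\<in>{0..N}. int i < int n + int d - int N + 1 \<longrightarrow> lam i n = real N"
  proof (intro ballI impI)
    fix i n assume "i \<in> {1..d}" "n \<in> {0..N}" "int i < int n + int d - int N + 1"
    then show "lam i n = real N" using F by auto
  qed
  have c4: "\<forall>i\<in>{1..d}. \<forall>n. i \<le> n \<and> int n < int N - int d + int i - 1 \<longrightarrow> lam i n \<le> lam i (n+1)"
  proof (intro ballI allI impI)
    fix i n assume "i \<in> {1..d}" "i \<le> n \<and> int n < int N - int d + int i - 1"
    then show "lam i n \<le> lam i (n+1)" using h by auto
  qed
  have c5: "\<forall>i\<in>{2..d}. \<forall>n. i \<le> n \<and> int n < int N - int d + int i \<longrightarrow> lam i n \<le> lam (i-1) (n-1)"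
  proof (intro ballI allI impI)
    fix i n assume "i \<in> {2..d}" "i \<le> n \<and> int n < int N - int d + int i"
    then show "lam i n \<le> lam (i-1) (n-1)" using g by auto
  qed
  show "(\<forall>i\<in>{1..d}. \<forall>n\<in>{0..N}. i > n \<longrightarrow> lam i n = 0) \<and>
    (\<forall>i\<in>{1..d}. \<forall>n\<in>{0..N}. int i < int n + int d - int N + 1 \<longrightarrow> lam i n = real N) \<and>
    (\<forall>n. 0 < n \<and> n < N \<longrightarrow> (\<Sum>i=1..d. lam i n) = real d * real n) \<and>
    (\<forall>i\<in>{1..d}. \<forall>n. i \<le> n \<and> int n < int N - int d + int i - 1 \<longrightarrow> lam i n \<le> lam i (n+1)) \<and>
    (\<forall>i\<in>{2..d}. \<forall>n. i \<le> n \<and> int n < int N - int d + int i \<longrightarrow> lam i n \<le> lam (i-1) (n-1)) \<and>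
    lam d d \<ge> 0 \<and>
    lam 1 (N - d) \<le> real N"
    using c1 c2 c4 c5 s F assms by auto
next
  assume A: "(\<forall>i\<in>{1..d}. \<forall>n\<in>{0..N}. i > n \<longrightarrow> lam i n = 0) \<and>
    (\<forall>i\<in>{1..d}. \<forall>n\<in>{0..N}. int i < int n + int d - int N + 1 \<longrightarrow> lam i n = real N) \<and>
    (\<forall>n. 0 < n \<and> n < N \<longrightarrow> (\<Sum>i=1..d. lam i n) = real d * real n) \<and>
    (\<forall>i\<in>{1..d}. \<forall>n. i \<le> n \<and> int n < int N - int d + int i - 1 \<longrightarrow> lam i n \<le> lam i (n+1)) \<and>
    (\<forall>i\<in>{2..d}. \<forall>n. i \<le> n \<and> int n < int N - int d + int i \<longrightarrow> lam i n \<le> lam (i-1) (n-1)) \<and>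
    lam d d \<ge> 0 \<and>
    lam 1 (N - d) \<le> real N"
  show "eigensteps N d lam"
  proof (rule bwd[OF assms])
    show "\<forall>i\<in>{1..d}. \<forall>n\<le>N. n < i \<longrightarrow> lam i n = 0" using A by auto
    show "\<forall>i\<in>{1..d}. \<forall>n\<le>N. i + N \<le> n + d \<longrightarrow> lam i n = real N"
    proof (intro ballI allI impI)
      fix i n assume "i \<in> {1..d}" "n \<le> N" "i + N \<le> n + d"
      moreover have "int i < int n + int d - int N + 1" using \<open>i + N \<le> n + d\<close> by linarith
      ultimately show "lam i n = real N" using A by auto
    qed
    show "\<forall>n. 0 < n \<and> n < N \<longrightarrow> (\<Sum>i=1..d. lam i n) = real d * real n" using A by blast
    show "\<forall>i\<in>{1..d}. \<forall>n. i \<le> n \<and> n + d + 1 < N + i \<longrightarrow> lam i n \<le> lam i (n+1)"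
    proof (intro ballI allI impI)
      fix i n assume "i \<in> {1..d}" "i \<le> n \<and> n + d + 1 < N + i"
      moreover have "int n < int N - int d + int i - 1" using calculation(2) by linarith
      ultimately show "lam i n \<le> lam i (n+1)" using A by auto
    qed
    show "\<forall>i\<in>{2..d}. \<forall>n. i \<le> n \<and> n + d < N + i \<longrightarrow> lam i n \<le> lam (i-1) (n-1)"
    proof (intro ballI allI impI)
      fix i n assume "i \<in> {2..d}" "i \<le> n \<and> n + d < N + i"
      moreover have "int n < int N - int d + int i" using calculation(2) by linarith
      ultimately show "lam i n \<le> lam (i-1) (n-1)" using A by auto
    qed
    show "lam d d \<ge> 0" "lam 1 (N - d) \<le> real N" using A by auto
  qed
qed

end
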